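(* Let $1<\chi\le\rho$ and let $G$ be a $(\rho,\chi)$-bidding profile. Then for every $T>0$, \[ \tau(T):=\sup\{t\in\mathbb{R}:G(t)<T\}<\infty \quad\text{and}\quad \mathrm{cost}_G(T)=\int_{-\infty}^{\tau(T)+1}G(t)\,\mathrm{d} t . \]
   Context: Online bidding with target $T>0$: a bidder submits increasing positive bids until one is $\ge T$; the cost is the sum of bids up to and including the first bid $\ge T$. Given $1<\chi\le\rho$, a $(\rho,\chi)$-bidding profile is a non-decreasing, left-continuous function $G:\mathbb{R}\to(0,\infty)$ such that (offset) $G(x)<1$ for all $x<0$ and $G(x)\ge 1$ for all $x>0$; (robustness) $\int_{-\infty}^{x+1}G(t)\,\mathrm{d} t\le \rho\,G(x)$ for all $x\in\mathbb{R}$; (consistency) $\int_{-\infty}^{1}G(t)\,\mathrm{d} t\le\chi$. The strategy driven by $G$ is the random bi-infinite bid sequence $(G(n+U))_{n\in\mathbb{Z}}$, where $U\sim\mathrm{Unif}(0,1]$ is a single random variable shared by all $n$; its cost on target $T$ is $\sum_{n\le n_*}G(n+U)$ with $n_*=\min\{n: G(n+U)\ge T\}$, and $\mathrm{cost}_G(T)$ denotes the expectation of this cost over $U$. *)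

theory Defs
  imports "HOL-Analysis.Analysis"
begin

text \<open>Integral of a positive function over (-infinity, x], as an extended
  nonnegative real (so that finiteness is part of any upper bound).\<close>
definition lower_int :: "(real \<Rightarrow> real) \<Rightarrow> real \<Rightarrow> ennreal" where
  "lower_int G x = (\<integral>\<^sup>+ t\<in>{..x}. ennreal (G t) \<partial>lborel)"

definition bidding_profile :: "real \<Rightarrow> real \<Rightarrow> (real \<Rightarrow> real) \<Rightarrow> bool" where
  "bidding_profile rho chi G \<longleftrightarrow>
     mono G \<and>
     (\<forall>x. continuous (at_left x) G) \<and>
     (\<forall>x. G x > 0) \<and>
     (\<forall>x<0. G x < 1) \<and>
     (\<forall>x>0. G x \<ge> 1) \<and>
     (\<forall>x. lower_int G (x + 1) \<le> ennreal (rho * G x)) \<and>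
     lower_int G 1 \<le> ennreal chi"

definition first_idx :: "(real \<Rightarrow> real) \<Rightarrow> real \<Rightarrow> real \<Rightarrow> int" where
  "first_idx G T u = (LEAST n::int. G (real_of_int n + u) \<ge> T)"

definition run_cost :: "(real \<Rightarrow> real) \<Rightarrow> real \<Rightarrow> real \<Rightarrow> ennreal" where
  "run_cost G T u =
     (\<integral>\<^sup>+ n. indicator {..first_idx G T u} n * ennreal (G (real_of_int n + u)) \<partial>count_space UNIV)"

text \<open>Expected cost over U uniform on (0,1] (density 1 on (0,1]).\<close>
definition cost :: "(real \<Rightarrow> real) \<Rightarrow> real \<Rightarrow> ennreal" where
  "cost G T = (\<integral>\<^sup>+ u\<in>{0<..1}. run_cost G T u \<partial>lborel)"

end

theory Submission
  imports Defs "HOL-Library.Nat_Bijection"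
begin

lemma shift_int:
  fixes f :: "real \<Rightarrow> ennreal" and a :: real
  assumes [measurable]: "f \<in> borel_measurable borel"
  shows "(\<integral>\<^sup>+u. f (a + u) * indicator {0<..1} u \<partial>lborel)
       = (\<integral>\<^sup>+t. f t * indicator {a<..a+1} t \<partial>lborel)"
proof -
  have "(\<integral>\<^sup>+t. f t * indicator {a<..a+1} t \<partial>lborel)
       = ennreal \<bar>1\<bar> * (\<integral>\<^sup>+x. f (a + 1 * x) * indicator {a<..a+1} (a + 1 * x) \<partial>lborel)"
    by (rule nn_integral_real_affine) auto
  also have "\<dots> = (\<integral>\<^sup>+u. f (a + u) * indicator {0<..1} u \<partial>lborel)"
    by (simp only: abs_one ennreal_1 mult_1 mult_1_left) (intro nn_integral_cong, auto simp: indicator_def)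
  finally show ?thesis by simp
qed

lemma first_idx_char:
  fixes G :: "real \<Rightarrow> real" and T tau u :: real
  assumes lt: "\<And>t. t < tau \<Longrightarrow> G t < T" and ge: "\<And>t. t > tau \<Longrightarrow> G t \<ge> T"
    and nz: "\<And>n::int. real_of_int n + u \<noteq> tau"
  shows "first_idx G T u = \<lfloor>tau - u\<rfloor> + 1"
  unfolding first_idx_def
proof (rule Least_equality)
  show "T \<le> G (real_of_int (\<lfloor>tau - u\<rfloor> + 1) + u)"
    by (rule ge) linarith
next
  fix y :: int assume "T \<le> G (real_of_int y + u)"
  show "\<lfloor>tau - u\<rfloor> + 1 \<le> y"
  proof (rule ccontr)
    assume "\<not> ?thesis"
    hence "y \<le> \<lfloor>tau - u\<rfloor>" by simp
    hence "real_of_int y + u \<le> tau" by linarith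
    with nz[of y] have "real_of_int y + u < tau" by simp
    with lt have "G (real_of_int y + u) < T" by blast
    with \<open>T \<le> G (real_of_int y + u)\<close> show False by simp
  qed
qed

lemma ennreal_all_le_top: "(\<And>r::real. ennreal r \<le> x) \<Longrightarrow> x = top"
  by (metis antisym dense_le ennreal_enn2real top_greatest)

lemma emeasure_Iic_top: "emeasure lborel {..(a::real)} = top"
proof (rule ennreal_all_le_top)
  fix r :: real
  have "ennreal r \<le> ennreal (a - (a - \<bar>r\<bar>))" by (intro ennreal_leI) simp
  also have "\<dots> = emeasure lborel {a - \<bar>r\<bar>..a}" by simp
  also have "\<dots> \<le> emeasure lborel {..a}" by (intro emeasure_mono) auto
  finally show "ennreal r \<le> emeasure lborel {..a}" .
qed

lemma unit_disj: "(a::int) \<noteq> b \<Longrightarrow> {real_of_int a<..real_of_int a + 1} \<inter> {real_of_int b<..real_of_int b + 1} = {}"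
proof (rule ccontr)
  assume "a \<noteq> b" "{real_of_int a<..real_of_int a + 1} \<inter> {real_of_int b<..real_of_int b + 1} \<noteq> {}"
  then obtain t where "real_of_int a < t" "t \<le> real_of_int a + 1" "real_of_int b < t" "t \<le> real_of_int b + 1" by auto
  hence "real_of_int a < real_of_int b + 1" "real_of_int b < real_of_int a + 1" by linarith+
  hence "a < b + 1" "b < a + 1" by linarith+
  with \<open>a \<noteq> b\<close> show False by linarith
qed

theorem lemma1:
  fixes rho chi T :: real and G :: "real \<Rightarrow> real"
  assumes "1 < chi" and "chi \<le> rho"
    and "bidding_profile rho chi G"
    and "T > 0"
  shows "{t. G t < T} \<noteq> {} \<and> bdd_above {t. G t < T} \<and>
         cost G T = lower_int G (Sup {t. G t < T} + 1)"
proof -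
  define S where "S = {t. G t < T}"
  have mono: "mono G" and pos: "\<And>x. G x > 0" and one: "\<And>x. x > 0 \<Longrightarrow> G x \<ge> 1"
    and rob: "\<And>x. lower_int G (x + 1) \<le> ennreal (rho * G x)"
    and con: "lower_int G 1 \<le> ennreal chi"
    using assms(3) unfolding bidding_profile_def by auto
  have Gm[measurable]: "G \<in> borel_measurable borel" by (rule borel_measurable_mono[OF mono])
  have ne: "S \<noteq> {}"
  proof
    assume "S = {}"
    hence GT: "\<And>t. G t \<ge> T" unfolding S_def by (auto simp: not_less)
    have "(\<integral>\<^sup>+t. ennreal T * indicator {..1::real} t \<partial>lborel) \<le> lower_int G 1"
      unfolding lower_int_def
      by (rule nn_integral_mono) (auto simp: indicator_def GT ennreal_leI)
    moreover have "(\<integral>\<^sup>+t. ennreal T * indicator {..1::real} t \<partial>lborel) = \<infinity>"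
      using \<open>T > 0\<close> by (simp add: nn_integral_cmult_indicator ennreal_mult_top emeasure_Iic_top)
    ultimately show False using con by (simp add: top_unique)
  qed
  have bdd: "bdd_above S"
  proof (rule ccontr)
    assume nb: "\<not> bdd_above S"
    have GT: "G t < T" for t
    proof -
      from nb obtain s where "s \<in> S" "s > t" unfolding bdd_above_def by (meson not_le)
      with mono show ?thesis unfolding S_def mono_def by (meson le_less_trans less_imp_le mem_Collect_eq)
    qed
    define x where "x = max 0 (rho * T)"
    have "(\<integral>\<^sup>+t. ennreal 1 * indicator {0<..x+1::real} t \<partial>lborel) \<le> lower_int G (x + 1)"
      unfolding lower_int_def
      by (rule nn_integral_mono) (auto simp: indicator_def one)
    moreover have "(\<integral>\<^sup>+t. ennreal 1 * indicator {0<..x+1::real} t \<partial>lborel) = ennreal (x + 1)"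
      unfolding x_def by (subst nn_integral_cmult_indicator) auto
    ultimately have "ennreal (x + 1) \<le> ennreal (rho * G x)" using rob[of x] by simp
    moreover have "rho * G x < x + 1"
    proof -
      have "rho > 0" using assms by simp
      hence "rho * G x < rho * T" using GT[of x] by simp
      thus ?thesis unfolding x_def by simp
    qed
    moreover have "rho * G x \<ge> 0" using pos[of x] assms by simp
    ultimately show False
      by (simp add: ennreal_le_iff)
  qed
  define tau where "tau = Sup S"
  have lt: "G t < T" if "t < tau" for t
  proof -
    from less_cSup_iff[OF ne bdd] that obtain s where "s \<in> S" "t < s" unfolding tau_def by auto
    with mono show ?thesis unfolding S_def mono_def by (meson le_less_trans less_imp_le mem_Collect_eq)
  qed
  have ge: "G t \<ge> T" if "t > tau" for t
  proof (rule ccontr)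
    assume "\<not> ?thesis"
    hence "t \<in> S" unfolding S_def by simp
    hence "t \<le> tau" unfolding tau_def using bdd by (simp add: cSup_upper)
    with that show False by simp
  qed
  define f where "f t = ennreal (G t) * indicator {..tau+1} t" for t
  have fm[measurable]: "f \<in> borel_measurable borel" unfolding f_def by measurable
  define N where "N = range (\<lambda>n::int. tau - real_of_int n)"
  have Nnull: "N \<in> null_sets lborel" unfolding N_def
    by (rule countable_imp_null_set_lborel) simp
  have runeq: "run_cost G T u = (\<Sum>k. f (real_of_int (int_decode k) + u))" if "u \<notin> N" for u
  proof -
    have nz: "real_of_int n + u \<noteq> tau" for n :: int
      using that unfolding N_def by (auto simp: algebra_simps)
    have fi: "first_idx G T u = \<lfloor>tau - u\<rfloor> + 1"
      by (rule first_idx_char[OF lt ge nz])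
    have "run_cost G T u = (\<integral>\<^sup>+n. f (real_of_int n + u) \<partial>count_space UNIV)"
      unfolding run_cost_def
    proof (intro nn_integral_cong)
      fix n :: int
      have "(n \<le> \<lfloor>tau - u\<rfloor> + 1) \<longleftrightarrow> (real_of_int n + u \<le> tau + 1)"
        using nz[of n] by linarith
      thus "indicator {..first_idx G T u} n * ennreal (G (real_of_int n + u)) = f (real_of_int n + u)"
        unfolding fi f_def by (simp add: indicator_def)
    qed
    also have "\<dots> = (\<integral>\<^sup>+k. f (real_of_int (int_decode k) + u) \<partial>count_space UNIV)"
      by (rule nn_integral_bij_count_space[symmetric, of int_decode UNIV UNIV "\<lambda>n. f (real_of_int n + u)"])
        (rule bij_int_decode)
    also have "\<dots> = (\<Sum>k. f (real_of_int (int_decode k) + u))"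
      by (rule nn_integral_count_space_nat)
    finally show ?thesis .
  qed
  define B where "B k = {real_of_int (int_decode k)<..real_of_int (int_decode k) + 1}" for k
  have "cost G T = (\<integral>\<^sup>+u. (\<Sum>k. f (real_of_int (int_decode k) + u)) * indicator {0<..1} u \<partial>lborel)"
    unfolding cost_def
  proof (rule nn_integral_cong_AE)
    show "AE u in lborel. run_cost G T u * indicator {0<..1} u =
        (\<Sum>k. f (real_of_int (int_decode k) + u)) * indicator {0<..1} u"
      by (rule AE_I'[OF Nnull]) (use runeq in force)
  qed
  also have "\<dots> = (\<integral>\<^sup>+u. (\<Sum>k. f (real_of_int (int_decode k) + u) * indicator {0<..1} u) \<partial>lborel)"
    by simp
  also have "\<dots> = (\<Sum>k. \<integral>\<^sup>+u. f (real_of_int (int_decode k) + u) * indicator {0<..1} u \<partial>lborel)"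
    by (rule nn_integral_suminf) measurable
  also have "\<dots> = (\<Sum>k. \<integral>\<^sup>+t\<in>B k. f t \<partial>lborel)"
    unfolding B_def by (subst shift_int[OF fm]) simp
  also have "\<dots> = (\<integral>\<^sup>+t\<in>(\<Union>k. B k). f t \<partial>lborel)"
  proof (rule nn_integral_disjoint_family[symmetric])
    show "disjoint_family B"
      unfolding disjoint_family_on_def B_def
    proof (intro ballI impI)
      fix m n :: nat assume "m \<noteq> n"
      hence "int_decode m \<noteq> int_decode n" using inj_int_decode by (meson injD)
      thus "{real_of_int (int_decode m)<..real_of_int (int_decode m) + 1} \<inter>
            {real_of_int (int_decode n)<..real_of_int (int_decode n) + 1} = {}"
        using unit_disj by blast
    qed
  qed (auto simp: B_def)
  also have "(\<Union>k. B k) = UNIV"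
  proof -
    have "t \<in> B (int_encode (\<lceil>t\<rceil> - 1))" for t
      unfolding B_def by simp linarith
    thus ?thesis by auto
  qed
  also have "(\<integral>\<^sup>+t\<in>UNIV. f t \<partial>lborel) = lower_int G (tau + 1)"
    unfolding lower_int_def f_def by simp
  finally show ?thesis using ne bdd unfolding S_def tau_def by simp
qed

end
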